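(* Let $p>\tfrac12$, $d_\pm\in\mathbb R$, and $d_k=d_+k^{-p}$ for $k>0$, $d_k=d_-|k|^{-p}$ for $k<0$, $d_0=0$. Let $\mathfrak D(x)=\sum_{k\in\mathbb Z}d_k e^{\mathrm i kx}$ (a $2\pi$-periodic distribution). Let $h_0\in C^\infty_c(\mathbb R)$ with $h_0=1$ on $[-\pi,\pi]$ and $\operatorname{supp}h_0\subset[-\tfrac{3\pi}{2},\tfrac{3\pi}{2}]$. Let $\zeta\in C^\infty(\mathbb R)$ vanish in a neighbourhood of $0$ and equal $1$ in a neighbourhood of infinity, let $\delta(\xi)=d_+\xi^{-p}$ for $\xi>0$, $\delta(\xi)=d_-|\xi|^{-p}$ for $\xi<0$, and let $\mathfrak F$ be the tempered distribution with $\widehat{\mathfrak F}=\zeta\delta$. Then the function $\mathfrak D_1=\mathfrak D\,h_0-\mathfrak F$ satisfies \[ \widehat{\mathfrak D_1}(\xi)=o(|\xi|^{-p}),\qquad |\xi|\to\infty. \]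
   Context: The Fourier transform is normalized as $\widehat f(\xi)=\frac1{2\pi}\int_{\mathbb R}f(x)e^{-\mathrm i x\xi}\,dx$ (extended to tempered distributions), so that $\widehat{\mathfrak D h_0}(\xi)=\sum_{k}d_k\widehat{h_0}(\xi-k)$. *)

theory Defs
  imports "HOL-Analysis.Analysis" "HOL-Library.Landau_Symbols"
begin

definition smooth :: "(real \<Rightarrow> real) \<Rightarrow> bool" where
  "smooth f \<longleftrightarrow> (\<forall>n x. ((deriv ^^ n) f) differentiable (at x))"

definition fourier :: "(real \<Rightarrow> real) \<Rightarrow> real \<Rightarrow> complex" where
  "fourier f \<xi> = (1 / (2 * complex_of_real pi)) *
      integral UNIV (\<lambda>x. complex_of_real (f x) * exp (- \<i> * complex_of_real (x * \<xi>)))"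

definition dcoef :: "real \<Rightarrow> real \<Rightarrow> real \<Rightarrow> int \<Rightarrow> real" where
  "dcoef p dp dm k = (if k > 0 then dp * (real_of_int k) powr (- p)
                      else if k < 0 then dm * \<bar>real_of_int k\<bar> powr (- p) else 0)"

text \<open>The symbol delta(xi) (value at 0 irrelevant since zeta vanishes near 0).\<close>
definition delta_sym :: "real \<Rightarrow> real \<Rightarrow> real \<Rightarrow> real \<Rightarrow> real" where
  "delta_sym p dp dm \<xi> = (if \<xi> > 0 then dp * \<xi> powr (- p)
                      else if \<xi> < 0 then dm * \<bar>\<xi>\<bar> powr (- p) else 0)"

text \<open>Fourier transform of D1 = D h0 - F:
  hat(D h0)(xi) = sum_k d_k hat(h0)(xi - k), and hat F = zeta * delta.\<close>
definition D1_hat :: "real \<Rightarrow> real \<Rightarrow> real \<Rightarrow> (real \<Rightarrow> real) \<Rightarrow> (real \<Rightarrow> real) \<Rightarrow> real \<Rightarrow> complex" where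
  "D1_hat p dp dm h0 \<zeta> \<xi> =
     (\<Sum>\<^sub>\<infinity>k::int. complex_of_real (dcoef p dp dm k) * fourier h0 (\<xi> - real_of_int k))
     - complex_of_real (\<zeta> \<xi> * delta_sym p dp dm \<xi>)"

end

theory Submission
  imports Defs "HOL-Complex_Analysis.Complex_Analysis"
begin


definition w :: "int \<Rightarrow> real" where "w j = 1 / (1 + \<bar>real_of_int j\<bar>)^2"

lemma w_nat_summable: "(\<lambda>n::nat. 1 / (1 + real n)^2) summable_on UNIV"
proof -
  have "summable (\<lambda>n::nat. 1 / (real (Suc n))^2)"
    using summable_ignore_initial_segment[OF inverse_power_summable[of 2], of 1]
    by (simp add: inverse_eq_divide)
  then have "summable (\<lambda>n::nat. 1 / (1 + real n)^2)" by (simp add: add.commute)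
  then show ?thesis by (subst summable_on_UNIV_nonneg_real_iff) auto
qed

lemma w_summable: "w summable_on UNIV"
proof -
  have A: "w summable_on (int ` UNIV)"
    by (subst summable_on_reindex) (auto simp: o_def w_def w_nat_summable)
  have B: "w summable_on ((\<lambda>n. - int n) ` UNIV)"
    by (subst summable_on_reindex) (auto simp: inj_on_def o_def w_def w_nat_summable)
  have U: "UNIV = int ` UNIV \<union> (\<lambda>n. - int n) ` UNIV"
    by (auto intro: int_cases2)
  show ?thesis using summable_on_union[OF A B] U by simp
qed

lemma w_nonneg: "w j \<ge> 0" by (simp add: w_def)

definition S0 :: real where "S0 = infsum w UNIV"

lemma shift_bound:
  fixes \<xi> :: real and k :: int
  shows "1 / (1 + \<bar>\<xi> - real_of_int k\<bar>)^2 \<le> 4 * w (k - \<lfloor>\<xi>\<rfloor>)"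
proof -
  define n where "n = \<lfloor>\<xi>\<rfloor>"
  have "\<bar>real_of_int (k - n)\<bar> \<le> \<bar>\<xi> - real_of_int k\<bar> + 1"
    unfolding n_def using floor_correct[of \<xi>] by (simp add: abs_if) linarith
  then have le: "1 + \<bar>real_of_int (k - n)\<bar> \<le> 2 * (1 + \<bar>\<xi> - real_of_int k\<bar>)"
    using abs_ge_zero[of "\<xi> - real_of_int k"] by argo
  have "(1 + \<bar>real_of_int (k - n)\<bar>)^2 \<le> (2 * (1 + \<bar>\<xi> - real_of_int k\<bar>))^2"
    by (rule power_mono[OF le]) auto
  then have "(1 + \<bar>real_of_int (k - n)\<bar>)^2 \<le> 4 * (1 + \<bar>\<xi> - real_of_int k\<bar>)^2"
    by (simp add: power2_eq_square algebra_simps)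
  then show ?thesis unfolding w_def n_def[symmetric]
    by (simp add: field_simps)
qed

lemma shifted_summable:
  fixes \<xi> :: real
  shows "(\<lambda>k::int. 1 / (1 + \<bar>\<xi> - real_of_int k\<bar>)^2) summable_on UNIV"
    and "infsum (\<lambda>k::int. 1 / (1 + \<bar>\<xi> - real_of_int k\<bar>)^2) UNIV \<le> 4 * S0"
proof -
  define n where "n = \<lfloor>\<xi>\<rfloor>"
  have bij: "bij_betw (\<lambda>k. k - n) UNIV UNIV"
    by (rule bij_betwI[where g="\<lambda>k. k + n"]) auto
  have ws: "(\<lambda>k. w (k - n)) summable_on UNIV"
    using summable_on_reindex_bij_betw[OF bij, of w] w_summable by (simp add: o_def)
  have wi: "infsum (\<lambda>k. w (k - n)) UNIV = S0"
    using infsum_reindex_bij_betw[OF bij, of w] by (simp add: o_def S0_def)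
  have ws4: "(\<lambda>k. 4 * w (k - n)) summable_on UNIV"
    using summable_on_cmult_right[OF ws] by simp
  show s: "(\<lambda>k::int. 1 / (1 + \<bar>\<xi> - real_of_int k\<bar>)^2) summable_on UNIV"
    by (rule summable_on_comparison_test[OF ws4]) (auto simp: shift_bound n_def)
  have "infsum (\<lambda>k::int. 1 / (1 + \<bar>\<xi> - real_of_int k\<bar>)^2) UNIV \<le> infsum (\<lambda>k. 4 * w (k - n)) UNIV"
    by (rule infsum_mono[OF s ws4]) (auto simp: shift_bound n_def)
  also have "\<dots> = 4 * S0" using infsum_cmult_right[of 4 "\<lambda>k. w (k - n)" UNIV] wi ws by simp
  finally show "infsum (\<lambda>k::int. 1 / (1 + \<bar>\<xi> - real_of_int k\<bar>)^2) UNIV \<le> 4 * S0" .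
qed



lemma exp_vd:
  "((\<lambda>x::real. exp (\<i> * complex_of_real (M * x))) has_vector_derivative
     (\<i> * complex_of_real M * exp (\<i> * complex_of_real (M * x)))) (at x within S)"
proof -
  have "((\<lambda>z. exp (\<i> * complex_of_real M * z)) has_field_derivative
          (\<i> * complex_of_real M * exp (\<i> * complex_of_real M * complex_of_real x))) (at (complex_of_real x))"
    by (auto intro!: derivative_eq_intros)
  from has_vector_derivative_real_field[OF this, where s=S] show ?thesis
    by (simp add: mult.assoc)
qed

lemma ibp_exp:
  fixes g g' :: "real \<Rightarrow> complex"
  assumes ab: "a \<le> b"
    and d: "\<And>x. x \<in> {a..b} \<Longrightarrow> (g has_vector_derivative g' x) (at x within {a..b})"
    and c: "continuous_on {a..b} g'"
  shows "integral {a..b} (\<lambda>x. g' x * exp (\<i> * complex_of_real (M * x))) =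
     g b * exp (\<i> * complex_of_real (M * b)) - g a * exp (\<i> * complex_of_real (M * a))
     - \<i> * complex_of_real M * integral {a..b} (\<lambda>x. g x * exp (\<i> * complex_of_real (M * x)))"
proof -
  define e where "e x = exp (\<i> * complex_of_real (M * x))" for x
  have ce: "continuous_on {a..b} e" unfolding e_def by (intro continuous_intros)
  have cg: "continuous_on {a..b} g" using d by (rule continuous_on_vector_derivative)
  have i1: "(\<lambda>x. g' x * e x) integrable_on {a..b}"
    by (intro integrable_continuous_interval continuous_intros c ce)
  have i2: "(\<lambda>x. g x * e x) integrable_on {a..b}"
    by (intro integrable_continuous_interval continuous_intros cg ce)
  have "((\<lambda>x. g x * (\<i> * complex_of_real M * e x) + g' x * e x) has_integral (g b * e b - g a * e a)) {a..b}"
    apply (rule fundamental_theorem_of_calculus[OF ab])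
    apply (rule has_vector_derivative_mult[OF d])
    apply assumption
    unfolding e_def by (rule exp_vd)
  then have "integral {a..b} (\<lambda>x. g x * (\<i> * complex_of_real M * e x) + g' x * e x) = g b * e b - g a * e a"
    by (rule integral_unique)
  moreover have "integral {a..b} (\<lambda>x. g x * (\<i> * complex_of_real M * e x) + g' x * e x)
      = \<i> * complex_of_real M * integral {a..b} (\<lambda>x. g x * e x) + integral {a..b} (\<lambda>x. g' x * e x)"
  proof -
    have "integral {a..b} (\<lambda>x. g x * (\<i> * complex_of_real M * e x) + g' x * e x)
        = integral {a..b} (\<lambda>x. \<i> * complex_of_real M * (g x * e x)) + integral {a..b} (\<lambda>x. g' x * e x)"
    proof -
      have "(\<lambda>x. \<i> * complex_of_real M * (g x * e x)) integrable_on {a..b}"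
        using i2 by (rule integrable_on_mult_right)
      then have "integral {a..b} (\<lambda>x. \<i> * complex_of_real M * (g x * e x) + g' x * e x)
        = integral {a..b} (\<lambda>x. \<i> * complex_of_real M * (g x * e x)) + integral {a..b} (\<lambda>x. g' x * e x)"
        using i1 by (rule integral_add)
      moreover have "(\<lambda>x. g x * (\<i> * complex_of_real M * e x) + g' x * e x) = (\<lambda>x. \<i> * complex_of_real M * (g x * e x) + g' x * e x)"
        by (simp add: fun_eq_iff mult.left_commute)
      ultimately show ?thesis by simp
    qed
    also have "integral {a..b} (\<lambda>x. \<i> * complex_of_real M * (g x * e x)) = \<i> * complex_of_real M * integral {a..b} (\<lambda>x. g x * e x)"
      by (rule integral_mult_right)
    finally show ?thesis .
  qed
  ultimately show ?thesis unfolding e_def[symmetric] by (simp add: algebra_simps)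
qed

lemma rl_bound:
  fixes g g' :: "real \<Rightarrow> complex"
  assumes ab: "a \<le> b"
    and d: "\<And>x. x \<in> {a..b} \<Longrightarrow> (g has_vector_derivative g' x) (at x within {a..b})"
    and c: "continuous_on {a..b} g'"
    and B: "\<And>x. x \<in> {a..b} \<Longrightarrow> norm (g' x) \<le> B"
    and M: "M \<noteq> 0"
  shows "norm (integral {a..b} (\<lambda>x. g x * exp (\<i> * complex_of_real (M * x))))
      \<le> (norm (g a) + norm (g b) + B * (b - a)) / \<bar>M\<bar>"
proof -
  define I where "I = integral {a..b} (\<lambda>x. g x * exp (\<i> * complex_of_real (M * x)))"
  define J where "J = integral {a..b} (\<lambda>x. g' x * exp (\<i> * complex_of_real (M * x)))"
  have eq: "\<i> * complex_of_real M * I = g b * exp (\<i> * complex_of_real (M * b)) - g a * exp (\<i> * complex_of_real (M * a)) - J"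
    using ibp_exp[OF ab d c, of M] unfolding I_def J_def by simp
  have cg: "continuous_on {a..b} g" using d by (rule continuous_on_vector_derivative)
  have hi: "((\<lambda>x. g' x * exp (\<i> * complex_of_real (M * x))) has_integral J) (cbox a b)"
    unfolding J_def box_real[symmetric] cbox_interval[symmetric]
    by (simp add: integrable_integral integrable_continuous_interval continuous_intros c)
  have B0: "0 \<le> B" using B[of a] ab by (meson atLeastAtMost_iff norm_ge_zero order_refl order_trans)
  have "norm J \<le> B * Henstock_Kurzweil_Integration.content (cbox a b)"
    by (rule has_integral_bound[OF B0 hi]) (auto simp: norm_mult B)
  then have nJ: "norm J \<le> B * (b - a)" using ab by simp
  have "norm (\<i> * complex_of_real M * I) \<le> norm (g a) + norm (g b) + B * (b - a)"
  proof -
    have n1: "norm (g b * exp (\<i> * complex_of_real (M * b))) = norm (g b)"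
      by (simp add: norm_mult norm_exp_i_times)
    have n2: "norm (g a * exp (\<i> * complex_of_real (M * a))) = norm (g a)"
      by (simp add: norm_mult norm_exp_i_times)
    show ?thesis unfolding eq
      using norm_triangle_ineq4[of "g b * exp (\<i> * complex_of_real (M * b)) - g a * exp (\<i> * complex_of_real (M * a))" J]
        norm_triangle_ineq4[of "g b * exp (\<i> * complex_of_real (M * b))" "g a * exp (\<i> * complex_of_real (M * a))"]
        n1 n2 nJ by linarith
  qed
  then have "\<bar>M\<bar> * norm I \<le> norm (g a) + norm (g b) + B * (b - a)"
    by (simp add: norm_mult)
  then show ?thesis unfolding I_def[symmetric] using M
    by (simp add: field_simps)
qed



lemma exp_rewr: "exp (- \<i> * complex_of_real (x * \<eta>)) = exp (\<i> * complex_of_real ((-\<eta>) * x))"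
  by (simp add: mult.commute)

locale bump =
  fixes h0 :: "real \<Rightarrow> real"
  assumes sm: "smooth h0"
    and supp: "\<And>x. \<bar>x\<bar> > 3 * pi / 2 \<Longrightarrow> h0 x = 0"
begin

abbreviation hd :: "nat \<Rightarrow> real \<Rightarrow> real" where "hd n \<equiv> (deriv ^^ n) h0"

lemma hd_Suc: "hd (Suc n) = deriv (hd n)" by simp

lemma hd_deriv: "(hd n has_real_derivative hd (Suc n) x) (at x)"
  using sm unfolding smooth_def hd_Suc by (simp add: DERIV_deriv_iff_real_differentiable)

lemma hd_cont: "continuous_on S (hd n)"
  by (rule continuous_at_imp_continuous_on) (meson DERIV_isCont hd_deriv)

lemma hd_zero: "\<bar>x\<bar> > 3 * pi / 2 \<Longrightarrow> hd n x = 0"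
proof (induction n arbitrary: x)
  case 0
  then show ?case using supp by simp
next
  case (Suc n)
  define U where "U = {y::real. 3 * pi / 2 < \<bar>y\<bar>}"
  have oU: "open U" unfolding U_def by (intro open_Collect_less continuous_intros)
  have "((\<lambda>_. 0) has_real_derivative 0) (at x)" by simp
  then have "(hd n has_real_derivative 0) (at x)"
    by (rule has_field_derivative_transform_within_open[OF _ oU]) (use Suc U_def in auto)
  then show ?case using hd_deriv[of n x] DERIV_unique by metis
qed

definition FI :: "nat \<Rightarrow> real \<Rightarrow> complex" where
  "FI n \<eta> = integral {-(7*pi/4)..(7*pi/4)} (\<lambda>x. complex_of_real (hd n x) * exp (\<i> * complex_of_real ((-\<eta>) * x)))"

lemma FI_Suc: "FI (Suc n) \<eta> = \<i> * complex_of_real \<eta> * FI n \<eta>"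
proof -
  have d: "((\<lambda>x. complex_of_real (hd n x)) has_vector_derivative complex_of_real (hd (Suc n) x)) (at x within {-(7*pi/4)..(7*pi/4)})" for x
    by (rule has_vector_derivative_at_within, rule has_vector_derivative_of_real, rule hd_deriv)
  have c: "continuous_on {-(7*pi/4)..(7*pi/4)} (\<lambda>x. complex_of_real (hd (Suc n) x))"
    by (intro continuous_intros hd_cont)
  have z1: "hd n ((7*pi/4)) = 0" by (rule hd_zero) (use pi_gt_zero in simp)
  have z2: "hd n (-(7*pi/4)) = 0" by (rule hd_zero) (use pi_gt_zero in simp)
  have "-(7*pi/4) \<le> (7*pi/4)" using pi_gt_zero by simp
  from ibp_exp[OF this d c, of "-\<eta>"] z1 z2 show ?thesis unfolding FI_def by simp
qed

lemma FI_pow: "FI m \<eta> = (\<i> * complex_of_real \<eta>)^m * FI 0 \<eta>"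
  by (induction m) (simp_all add: FI_Suc)

lemma FI_bound: "\<exists>B. \<forall>\<eta>. norm (FI m \<eta>) \<le> B"
proof -
  have "compact (hd m ` {-(7*pi/4)..(7*pi/4)})"
    by (intro compact_continuous_image hd_cont compact_Icc)
  then have "bounded (hd m ` {-(7*pi/4)..(7*pi/4)})" by (rule compact_imp_bounded)
  then obtain B where B0: "\<And>y. y \<in> hd m ` {-(7*pi/4)..(7*pi/4)} \<Longrightarrow> norm y \<le> B"
    unfolding bounded_iff by blast
  have B: "\<bar>hd m x\<bar> \<le> B" if "x \<in> {-(7*pi/4)..(7*pi/4)}" for x
    using B0[of "hd m x"] that by simp
  have B0': "0 \<le> B" using B[of 0] pi_gt_zero by force
  have "norm (FI m \<eta>) \<le> B * Henstock_Kurzweil_Integration.content (cbox (-(7*pi/4)) ((7*pi/4)))" for \<eta>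
    unfolding FI_def
  proof (rule has_integral_bound[OF B0'])
    have "(\<lambda>x. complex_of_real (hd m x) * exp (\<i> * complex_of_real ((-\<eta>) * x))) integrable_on {-(7*pi/4)..(7*pi/4)}"
      by (intro integrable_continuous_interval continuous_intros hd_cont)
    then show "((\<lambda>x. complex_of_real (hd m x) * exp (\<i> * complex_of_real ((-\<eta>) * x))) has_integral
       integral {-(7*pi/4)..(7*pi/4)} (\<lambda>x. complex_of_real (hd m x) * exp (\<i> * complex_of_real ((-\<eta>) * x)))) (cbox (-(7*pi/4)) ((7*pi/4)))"
      by (simp add: integrable_integral)
    fix x assume "x \<in> cbox (-(7*pi/4)) ((7*pi/4))"
    then show "norm (complex_of_real (hd m x) * exp (\<i> * complex_of_real ((-\<eta>) * x))) \<le> B"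
      using B by (simp add: norm_mult norm_exp_i_times)
  qed
  then show ?thesis by blast
qed

lemma fourier_FI: "fourier h0 \<eta> = FI 0 \<eta> / (2 * complex_of_real pi)"
proof -
  have i: "(\<lambda>x. complex_of_real (hd 0 x) * exp (\<i> * complex_of_real ((-\<eta>) * x))) integrable_on {-(7*pi/4)..(7*pi/4)}"
  proof -
    have ch: "continuous_on S h0" for S using hd_cont[of S 0] by simp
    show ?thesis by simp (intro integrable_continuous_interval continuous_intros ch)
  qed
  have eq: "(\<lambda>x. complex_of_real (h0 x) * exp (- \<i> * complex_of_real (x * \<eta>))) =
     (\<lambda>x. if x \<in> {-(7*pi/4)..(7*pi/4)} then complex_of_real (hd 0 x) * exp (\<i> * complex_of_real ((-\<eta>) * x)) else 0)"
  proof
    fix x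
    show "complex_of_real (h0 x) * exp (- \<i> * complex_of_real (x * \<eta>)) =
     (if x \<in> {-(7*pi/4)..(7*pi/4)} then complex_of_real (hd 0 x) * exp (\<i> * complex_of_real ((-\<eta>) * x)) else 0)"
    proof (cases "x \<in> {-(7*pi/4)..(7*pi/4)}")
      case True then show ?thesis by (subst exp_rewr) simp
    next
      case False
      then have "\<bar>x\<bar> > 3 * pi / 2" using pi_gt_zero by auto
      then show ?thesis using False supp by simp
    qed
  qed
  have "integral UNIV (\<lambda>x. complex_of_real (h0 x) * exp (- \<i> * complex_of_real (x * \<eta>))) = FI 0 \<eta>"
    unfolding eq FI_def
    by (rule integral_unique, subst has_integral_restrict_UNIV, rule integrable_integral, rule i)
  then show ?thesis unfolding fourier_def by simp
qed

lemma fourier_decay: "\<exists>C. \<forall>\<eta>. norm (fourier h0 \<eta>) \<le> C / (1 + \<bar>\<eta>\<bar>)^m"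
proof -
  obtain B0 where B0: "\<And>\<eta>. norm (FI 0 \<eta>) \<le> B0" using FI_bound by blast
  obtain Bm where Bm: "\<And>\<eta>. norm (FI m \<eta>) \<le> Bm" using FI_bound by blast
  define C where "C = 2^m * max B0 Bm / (2 * pi)"
  have "norm (fourier h0 \<eta>) \<le> C / (1 + \<bar>\<eta>\<bar>)^m" for \<eta>
  proof -
    have nf: "norm (fourier h0 \<eta>) = norm (FI 0 \<eta>) / (2 * pi)"
      by (simp add: fourier_FI norm_divide norm_mult)
    have "(1 + \<bar>\<eta>\<bar>)^m * norm (FI 0 \<eta>) \<le> 2^m * max B0 Bm"
    proof (cases "\<bar>\<eta>\<bar> \<le> 1")
      case True
      have "(1 + \<bar>\<eta>\<bar>)^m \<le> 2^m" by (rule power_mono) (use True in auto)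
      moreover have "norm (FI 0 \<eta>) \<le> max B0 Bm" using B0[of \<eta>] by simp
      ultimately show ?thesis by (intro mult_mono) auto
    next
      case False
      have "(1 + \<bar>\<eta>\<bar>)^m \<le> (2 * \<bar>\<eta>\<bar>)^m" by (rule power_mono) (use False in auto)
      also have "\<dots> = 2^m * \<bar>\<eta>\<bar>^m" by (simp add: power_mult_distrib)
      finally have a: "(1 + \<bar>\<eta>\<bar>)^m * norm (FI 0 \<eta>) \<le> 2^m * (\<bar>\<eta>\<bar>^m * norm (FI 0 \<eta>))"
        using mult_right_mono[OF _ norm_ge_zero, of "(1 + \<bar>\<eta>\<bar>)^m" "2^m * \<bar>\<eta>\<bar>^m" "FI 0 \<eta>"]
        by (simp add: mult.assoc)
      have "\<bar>\<eta>\<bar>^m * norm (FI 0 \<eta>) = norm (FI m \<eta>)"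
        by (subst FI_pow[of m]) (simp add: norm_mult norm_power)
      also have "\<dots> \<le> max B0 Bm" using Bm[of \<eta>] by simp
      finally have "2^m * (\<bar>\<eta>\<bar>^m * norm (FI 0 \<eta>)) \<le> 2^m * max B0 Bm"
        by (intro mult_left_mono) auto
      then show ?thesis using a by linarith
    qed
    then have "norm (FI 0 \<eta>) \<le> 2^m * max B0 Bm / (1 + \<bar>\<eta>\<bar>)^m"
      by (subst pos_le_divide_eq) (auto simp: mult.commute)
    then have "norm (FI 0 \<eta>) / (2 * pi) \<le> 2^m * max B0 Bm / (1 + \<bar>\<eta>\<bar>)^m / (2 * pi)"
      by (rule divide_right_mono) (use pi_gt_zero in simp)
    then show ?thesis unfolding nf C_def by (simp add: divide_simps)
  qed
  then show ?thesis by blast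
qed

end


lemma sym_partial_sums:
  fixes f :: "int \<Rightarrow> 'a::{topological_comm_monoid_add, t2_space}"
  assumes "f summable_on UNIV"
  shows "(\<lambda>N::nat. \<Sum>k\<in>{-int N..int N}. f k) \<longlonglongrightarrow> infsum f UNIV"
proof -
  have hs: "(sum f \<longlongrightarrow> infsum f UNIV) (finite_subsets_at_top UNIV)"
    using has_sum_infsum[OF assms] unfolding has_sum_def .
  have fl: "filterlim (\<lambda>N::nat. {-int N..int N}) (finite_subsets_at_top UNIV) sequentially"
  proof (subst filterlim_finite_subsets_at_top, safe)
    fix X :: "int set" assume X: "finite X"
    obtain B where B: "\<And>x. x \<in> X \<Longrightarrow> \<bar>x\<bar> \<le> B"
      using X by (metis finite_imageI finite_nat_set_iff_bounded_le image_eqI nat_int nat_le_iff)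
    show "\<forall>\<^sub>F y in sequentially. finite {- int y..int y} \<and> X \<subseteq> {- int y..int y} \<and> {- int y..int y} \<subseteq> UNIV"
      using eventually_ge_at_top[of "nat B"]
      by eventually_elim (use B in force)
  qed
  show ?thesis using tendsto_compose_filtermap[of "sum f"] filterlim_compose[OF hs fl] by (simp add: o_def)
qed

lemma rl_seq:
  fixes I :: "real \<Rightarrow> complex"
  assumes "\<And>M. M \<noteq> 0 \<Longrightarrow> norm (I M) \<le> K / \<bar>M\<bar>"
  shows "(\<lambda>N::nat. I (real N + 1)) \<longlonglongrightarrow> 0" and "(\<lambda>N::nat. I (- real N)) \<longlonglongrightarrow> 0"
proof -
  have K0: "((\<lambda>N::nat. \<bar>K\<bar> / real N) \<longlonglongrightarrow> 0)"
    by (intro tendsto_divide_0[OF tendsto_const] filterlim_at_top_imp_at_infinity filterlim_real_sequentially)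
  have "\<forall>\<^sub>F N in sequentially. norm (I (real N + 1)) \<le> \<bar>K\<bar> / real N"
    using eventually_ge_at_top[of "1::nat"]
  proof eventually_elim
    case (elim N)
    have "norm (I (real N + 1)) \<le> K / \<bar>real N + 1\<bar>" by (rule assms) simp
    also have "\<dots> \<le> \<bar>K\<bar> / \<bar>real N + 1\<bar>" by (intro divide_right_mono) auto
    also have "\<dots> \<le> \<bar>K\<bar> / real N" using elim by (intro divide_left_mono) auto
    finally show ?case .
  qed
  then show "(\<lambda>N::nat. I (real N + 1)) \<longlonglongrightarrow> 0" by (rule Lim_null_comparison[OF _ K0])
  have "\<forall>\<^sub>F N in sequentially. norm (I (- real N)) \<le> \<bar>K\<bar> / real N"
    using eventually_ge_at_top[of "1::nat"]
  proof eventually_elim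
    case (elim N)
    have "norm (I (- real N)) \<le> K / \<bar>- real N\<bar>" by (rule assms) (use elim in simp)
    also have "\<dots> \<le> \<bar>K\<bar> / \<bar>- real N\<bar>" by (intro divide_right_mono) auto
    finally show ?case by simp
  qed
  then show "(\<lambda>N::nat. I (- real N)) \<longlonglongrightarrow> 0" by (rule Lim_null_comparison[OF _ K0])
qed

lemma rl_holo:
  fixes V :: "complex \<Rightarrow> complex" and \<phi> \<phi>' :: "real \<Rightarrow> real"
  assumes hol: "V holomorphic_on W" and oW: "open W" and inW: "\<And>x. x \<in> {a..b} \<Longrightarrow> complex_of_real x \<in> W"
    and ab: "a \<le> b"
    and dphi: "\<And>x. (\<phi> has_real_derivative \<phi>' x) (at x)"
    and cphi: "continuous_on {a..b} \<phi>'"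
  shows "\<exists>K. \<forall>M. M \<noteq> 0 \<longrightarrow> norm (integral {a..b} (\<lambda>x. (complex_of_real (\<phi> x) * V (complex_of_real x)) * exp (\<i> * complex_of_real (M * x)))) \<le> K / \<bar>M\<bar>"
proof -
  define g where "g x = complex_of_real (\<phi> x) * V (complex_of_real x)" for x
  define g' where "g' x = complex_of_real (\<phi> x) * deriv V (complex_of_real x) + complex_of_real (\<phi>' x) * V (complex_of_real x)" for x
  have dV: "(V has_field_derivative deriv V z) (at z)" if "z \<in> W" for z
    using hol oW that by (simp add: holomorphic_derivI)
  have d: "(g has_vector_derivative g' x) (at x within {a..b})" if "x \<in> {a..b}" for x
    unfolding g_def g'_def
    apply (rule has_vector_derivative_mult[THEN has_vector_derivative_eq_rhs])
      apply (rule has_vector_derivative_at_within, rule has_vector_derivative_of_real, rule dphi)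
     apply (rule has_vector_derivative_real_field, rule dV, rule inW, rule that)
    apply (simp add: algebra_simps)
    done
  have cphi0: "continuous_on {a..b} \<phi>"
    by (rule continuous_at_imp_continuous_on) (meson DERIV_isCont dphi)
  have cV: "continuous_on {a..b} (\<lambda>x. V (complex_of_real x))"
    by (rule continuous_on_compose2[OF holomorphic_on_imp_continuous_on[OF hol]])
       (auto intro!: continuous_intros inW)
  have cdV: "continuous_on {a..b} (\<lambda>x. deriv V (complex_of_real x))"
    by (rule continuous_on_compose2[OF holomorphic_on_imp_continuous_on[OF holomorphic_deriv[OF hol oW]]])
       (auto intro!: continuous_intros inW)
  have c: "continuous_on {a..b} g'" unfolding g'_def
    by (intro continuous_intros cphi0 cphi cV cdV)
  have "compact (g' ` {a..b})" by (intro compact_continuous_image c compact_Icc)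
  then have "bounded (g' ` {a..b})" by (rule compact_imp_bounded)
  then obtain B where B0: "\<And>y. y \<in> g' ` {a..b} \<Longrightarrow> norm y \<le> B"
    unfolding bounded_iff by blast
  have B: "norm (g' x) \<le> B" if "x \<in> {a..b}" for x using B0 that by blast
  show ?thesis
    using rl_bound[OF ab d c B] unfolding g_def by blast
qed

lemma exp_int_integral:
  "integral {-pi..pi} (\<lambda>x. exp (\<i> * complex_of_real (real_of_int k * x))) = (if k = 0 then 2 * complex_of_real pi else 0)"
proof (cases "k = 0")
  case True then show ?thesis by (simp add: scaleR_conv_of_real)
next
  case False
  define c where "c = \<i> * complex_of_real (real_of_int k)"
  have c0: "c \<noteq> 0" using False by (simp add: c_def)
  have "((\<lambda>x. exp (\<i> * complex_of_real (real_of_int k * x))) has_integral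
          (exp (\<i> * complex_of_real (real_of_int k * pi)) / c - exp (\<i> * complex_of_real (real_of_int k * (-pi))) / c)) {-pi..pi}"
    apply (rule fundamental_theorem_of_calculus)
     apply simp
    apply (rule has_vector_derivative_divide[OF exp_vd, THEN has_vector_derivative_eq_rhs])
    using c0 by (simp add: c_def)
  moreover have "exp (\<i> * complex_of_real (real_of_int k * pi)) = exp (\<i> * complex_of_real (real_of_int k * (-pi)))"
  proof -
    have e: "\<i> * complex_of_real (real_of_int k * pi) = \<i> * complex_of_real (real_of_int k * (-pi)) + \<i> * (of_int k * (of_real pi * 2))"
      by (simp add: algebra_simps)
    show ?thesis unfolding e by (rule exp_plus_2pin)
  qed
  ultimately show ?thesis using False by (simp add: integral_unique)
qed



definition DN :: "nat \<Rightarrow> real \<Rightarrow> complex" where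
  "DN N x = (\<Sum>k\<in>{-int N..int N}. exp (\<i> * complex_of_real (real_of_int k * x)))"

lemma eprod: "exp (\<i> * complex_of_real a) * exp (\<i> * complex_of_real b) = exp (\<i> * complex_of_real (a + b))"
  by (simp add: exp_add[symmetric] algebra_simps)

lemma sym_set_Suc: "{-int (Suc N)..int (Suc N)} = insert (-int (Suc N)) (insert (int (Suc N)) {-int N..int N})"
  by auto

lemma DN_Suc: "DN (Suc N) x = DN N x + exp (\<i> * complex_of_real ((real N + 1) * x)) + exp (\<i> * complex_of_real ((- real N - 1) * x))"
proof -
  have a: "real_of_int (int (Suc N)) = real N + 1" by simp
  have b: "real_of_int (- int (Suc N)) = - real N - 1" by simp
  show ?thesis unfolding DN_def sym_set_Suc
    by (subst sum.insert, simp, simp, subst sum.insert, simp, simp) (simp only: a b add.commute add.left_commute)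
qed

lemma DN_mult: "DN N x * (exp (\<i> * complex_of_real x) - 1) =
   exp (\<i> * complex_of_real ((real N + 1) * x)) - exp (\<i> * complex_of_real ((- real N) * x))"
proof (induction N)
  case 0
  then show ?case by (simp add: DN_def algebra_simps)
next
  case (Suc N)
  have e1: "exp (\<i> * complex_of_real ((real N + 1) * x)) * exp (\<i> * complex_of_real x) = exp (\<i> * complex_of_real ((real (Suc N) + 1) * x))"
    unfolding eprod by (rule arg_cong[where f="\<lambda>t. exp (\<i> * complex_of_real t)"]) (simp add: algebra_simps)
  have e2: "exp (\<i> * complex_of_real ((- real N - 1) * x)) * exp (\<i> * complex_of_real x) = exp (\<i> * complex_of_real ((- real N) * x))"
    unfolding eprod by (rule arg_cong[where f="\<lambda>t. exp (\<i> * complex_of_real t)"]) (simp add: algebra_simps)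
  have "DN (Suc N) x * (exp (\<i> * complex_of_real x) - 1) =
     DN N x * (exp (\<i> * complex_of_real x) - 1)
     + exp (\<i> * complex_of_real ((real N + 1) * x)) * exp (\<i> * complex_of_real x) - exp (\<i> * complex_of_real ((real N + 1) * x))
     + exp (\<i> * complex_of_real ((- real N - 1) * x)) * exp (\<i> * complex_of_real x) - exp (\<i> * complex_of_real ((- real N - 1) * x))"
    unfolding DN_Suc by (simp add: algebra_simps)
  also have "\<dots> = exp (\<i> * complex_of_real ((real (Suc N) + 1) * x)) - exp (\<i> * complex_of_real ((- real (Suc N)) * x))"
  proof -
    have e3: "exp (\<i> * complex_of_real ((- real (Suc N)) * x)) = exp (\<i> * complex_of_real ((- real N - 1) * x))"
      by (rule arg_cong[where f="\<lambda>t. exp (\<i> * complex_of_real t)"]) (simp add: algebra_simps)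
    have grp: "(a::complex) - b + c - a + b - d = c - d" for a b c d by simp
    show ?thesis unfolding Suc e1 e2 e3 by (rule grp)
  qed
  finally show ?case .
qed

lemma exp_ne_1: "0 < \<bar>x\<bar> \<Longrightarrow> \<bar>x\<bar> < 2 * pi \<Longrightarrow> exp (\<i> * complex_of_real x) \<noteq> 1"
proof
  assume x: "0 < \<bar>x\<bar>" "\<bar>x\<bar> < 2 * pi" and e: "exp (\<i> * complex_of_real x) = 1"
  then obtain n :: int where n: "x = of_int (2 * n) * pi" by (auto simp: exp_eq_1)
  show False
  proof (cases "n = 0")
    case True then show False using x n by simp
  next
    case False
    then have "1 \<le> \<bar>real_of_int n\<bar>" by linarith
    then have "2 * pi \<le> \<bar>x\<bar>" unfolding n using pi_gt_zero by (simp add: abs_mult)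
    then show False using x by simp
  qed
qed

lemma DN_integral: "integral {-pi..pi} (DN N) = 2 * complex_of_real pi"
proof -
  have "integral {-pi..pi} (DN N) = (\<Sum>k\<in>{-int N..int N}. integral {-pi..pi} (\<lambda>x. exp (\<i> * complex_of_real (real_of_int k * x))))"
    unfolding DN_def
    by (rule Henstock_Kurzweil_Integration.integral_sum) (auto intro!: integrable_continuous_interval continuous_intros)
  also have "\<dots> = (\<Sum>k\<in>{-int N..int N}. (if k = 0 then 2 * complex_of_real pi else 0))"
    by (intro sum.cong refl exp_int_integral)
  also have "\<dots> = 2 * complex_of_real pi" by (simp add: sum.delta)
  finally show ?thesis .
qed



locale bump2 = bump +
  assumes one: "\<And>x. -pi \<le> x \<Longrightarrow> x \<le> pi \<Longrightarrow> h0 x = 1"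
begin

lemma H_summable: "(\<lambda>k::int. fourier h0 (\<xi> - real_of_int k)) summable_on UNIV"
proof -
  obtain C where C: "\<And>\<eta>. norm (fourier h0 \<eta>) \<le> C / (1 + \<bar>\<eta>\<bar>)^2" using fourier_decay[of 2] by blast
  have s: "(\<lambda>k::int. C * (1 / (1 + \<bar>\<xi> - real_of_int k\<bar>)^2)) summable_on UNIV"
    by (rule summable_on_cmult_right, rule shifted_summable(1))
  have "(\<lambda>k::int. norm (fourier h0 (\<xi> - real_of_int k))) summable_on UNIV"
    by (rule Infinite_Sum.abs_summable_on_comparison_test'[OF s]) (use C in simp)
  then show ?thesis by (simp add: summable_on_iff_abs_summable_on_complex)
qed

lemma poisson: "infsum (\<lambda>k::int. fourier h0 (\<xi> - real_of_int k)) UNIV = 1"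
proof -
  define L where "L = 7 * pi / 4"
  have L: "pi < L" "L < 2 * pi" unfolding L_def using pi_gt_zero by auto
  define e where "e M x = exp (\<i> * complex_of_real (M * x))" for M x :: real
  define fA where "fA z = exp (\<i> * complex_of_real (-\<xi>) * z)" for z
  define fB where "fB z = exp (\<i> * z)" for z
  define A where "A = (\<lambda>z. if z = 0 then deriv fA 0 else (fA z - fA 0) / (z - 0))"
  define B where "B = (\<lambda>z. if z = 0 then deriv fB 0 else (fB z - fB 0) / (z - 0))"
  have hfA: "fA holomorphic_on UNIV" unfolding fA_def by (intro holomorphic_intros)
  have hfB: "fB holomorphic_on UNIV" unfolding fB_def by (intro holomorphic_intros)
  have hA: "A holomorphic_on UNIV" unfolding A_def
    by (rule pole_lemma[OF hfA]) simp
  have hB: "B holomorphic_on UNIV" unfolding B_def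
    by (rule pole_lemma[OF hfB]) simp
  have dA: "deriv fA 0 = \<i> * complex_of_real (-\<xi>)"
    unfolding fA_def by (rule DERIV_imp_deriv) (auto intro!: derivative_eq_intros)
  have dB: "deriv fB 0 = \<i>"
    unfolding fB_def by (rule DERIV_imp_deriv) (auto intro!: derivative_eq_intros)
  define W where "W = {z. B z \<noteq> 0}"
  have oW: "open W" unfolding W_def
    by (rule open_Collect_neq) (auto intro: holomorphic_on_imp_continuous_on hB)
  define U where "U z = A z / B z" for z
  have hU: "U holomorphic_on W" unfolding U_def W_def
    by (intro holomorphic_intros holomorphic_on_subset[OF hA] holomorphic_on_subset[OF hB]) auto
  have inW: "complex_of_real x \<in> W" if "x \<in> {-pi..pi}" for x
  proof (cases "x = 0")
    case True then show ?thesis by (simp add: W_def B_def dB)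
  next
    case False
    have "\<bar>x\<bar> < 2 * pi" using that pi_gt3 by (auto simp: abs_less_iff)
    then have "exp (\<i> * complex_of_real x) \<noteq> 1" using exp_ne_1 False by simp
    then show ?thesis using False by (simp add: W_def B_def fB_def)
  qed
  have u_eq: "U (complex_of_real x) * (exp (\<i> * complex_of_real x) - 1) = e (-\<xi>) x - 1"
    if "x \<in> {-pi..pi}" for x
  proof (cases "x = 0")
    case True then show ?thesis by (simp add: e_def)
  next
    case False
    have "\<bar>x\<bar> < 2 * pi" using that pi_gt3 by (auto simp: abs_less_iff)
    then have ne: "exp (\<i> * complex_of_real x) \<noteq> 1" using exp_ne_1 False by simp
    then show ?thesis using False
      by (simp add: U_def A_def B_def fA_def fB_def e_def field_simps mult.commute)
  qed
  define V where "V z = exp (\<i> * complex_of_real (-\<xi>) * z) / (exp (\<i> * z) - 1)" for z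
  define W2 where "W2 = {z. exp (\<i> * z) \<noteq> 1}"
  have oW2: "open W2" unfolding W2_def
    by (rule open_Collect_neq) (auto intro!: continuous_intros)
  have hV: "V holomorphic_on W2" unfolding V_def W2_def
    by (intro holomorphic_intros) auto
  have inW2R: "complex_of_real x \<in> W2" if "x \<in> {pi..L}" for x
    using exp_ne_1[of x] that L pi_gt_zero by (auto simp: W2_def)
  have inW2L: "complex_of_real x \<in> W2" if "x \<in> {-L..-pi}" for x
    using exp_ne_1[of x] that L pi_gt_zero by (auto simp: W2_def)
  have dh0: "(h0 has_real_derivative hd 1 x) (at x)" for x using hd_deriv[of 0 x] by simp
  have ch1: "continuous_on S (hd 1)" for S by (rule hd_cont)
  have d1: "((\<lambda>_. 1) has_real_derivative (\<lambda>_. 0) x) (at x)" for x :: real by simp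
  obtain K1 where K1: "\<And>M. M \<noteq> 0 \<Longrightarrow> norm (integral {-pi..pi} (\<lambda>x. (complex_of_real 1 * U (complex_of_real x)) * e M x)) \<le> K1 / \<bar>M\<bar>"
    using rl_holo[OF hU oW inW _ d1, of "-pi" pi] pi_gt_zero unfolding e_def by auto
  obtain KR where KR: "\<And>M. M \<noteq> 0 \<Longrightarrow> norm (integral {pi..L} (\<lambda>x. (complex_of_real (h0 x) * V (complex_of_real x)) * e M x)) \<le> KR / \<bar>M\<bar>"
    using rl_holo[OF hV oW2 inW2R _ dh0 ch1, where a=pi and b=L] L unfolding e_def by auto
  obtain KL where KL: "\<And>M. M \<noteq> 0 \<Longrightarrow> norm (integral {-L..-pi} (\<lambda>x. (complex_of_real (h0 x) * V (complex_of_real x)) * e M x)) \<le> KL / \<bar>M\<bar>"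
    using rl_holo[OF hV oW2 inW2L _ dh0 ch1, where a="-L" and b="-pi"] L unfolding e_def by auto
  define I1 where "I1 M = integral {-pi..pi} (\<lambda>x. (complex_of_real 1 * U (complex_of_real x)) * e M x)" for M
  define IR where "IR M = integral {pi..L} (\<lambda>x. (complex_of_real (h0 x) * V (complex_of_real x)) * e M x)" for M
  define IL where "IL M = integral {-L..-pi} (\<lambda>x. (complex_of_real (h0 x) * V (complex_of_real x)) * e M x)" for M
  have t1: "(\<lambda>N::nat. I1 (real N + 1)) \<longlonglongrightarrow> 0" "(\<lambda>N::nat. I1 (- real N)) \<longlonglongrightarrow> 0"
    using rl_seq[of I1 K1] K1 unfolding I1_def by auto
  have tR: "(\<lambda>N::nat. IR (real N + 1)) \<longlonglongrightarrow> 0" "(\<lambda>N::nat. IR (- real N)) \<longlonglongrightarrow> 0"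
    using rl_seq[of IR KR] KR unfolding IR_def by auto
  have tL: "(\<lambda>N::nat. IL (real N + 1)) \<longlonglongrightarrow> 0" "(\<lambda>N::nat. IL (- real N)) \<longlonglongrightarrow> 0"
    using rl_seq[of IL KL] KL unfolding IL_def by auto
  have ch0: "continuous_on S h0" for S using hd_cont[of S 0] by simp
  have cU: "continuous_on {-pi..pi} (\<lambda>x. U (complex_of_real x))"
    by (rule continuous_on_compose2[OF holomorphic_on_imp_continuous_on[OF hU]])
       (auto intro!: continuous_intros inW)
  have cVR: "continuous_on {pi..L} (\<lambda>x. V (complex_of_real x))"
    by (rule continuous_on_compose2[OF holomorphic_on_imp_continuous_on[OF hV]])
       (auto intro!: continuous_intros inW2R)
  have cVL: "continuous_on {-L..-pi} (\<lambda>x. V (complex_of_real x))"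
    by (rule continuous_on_compose2[OF holomorphic_on_imp_continuous_on[OF hV]])
       (auto intro!: continuous_intros inW2L)
  have ce: "continuous_on S (e M)" for S M unfolding e_def by (intro continuous_intros)
  have cDN: "continuous_on S (DN N)" for S N unfolding DN_def by (intro continuous_intros)
  define T where "T N = (\<Sum>k\<in>{-int N..int N}. fourier h0 (\<xi> - real_of_int k))" for N
  have key: "2 * complex_of_real pi * T N = 2 * complex_of_real pi + (I1 (real N + 1) - I1 (- real N))
      + (IR (real N + 1) - IR (- real N)) + (IL (real N + 1) - IL (- real N))" for N
  proof -
    define F where "F x = complex_of_real (h0 x) * e (-\<xi>) x * DN N x" for x
    have cF: "continuous_on S F" for S unfolding F_def by (intro continuous_intros ch0 ce cDN)
    have iF: "F integrable_on {a..b}" for a b by (intro integrable_continuous_interval cF)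
    have s1: "2 * complex_of_real pi * T N = integral {-L..L} F"
    proof -
      have "2 * complex_of_real pi * T N = (\<Sum>k\<in>{-int N..int N}. FI 0 (\<xi> - real_of_int k))"
        unfolding T_def sum_distrib_left fourier_FI by simp
      also have "\<dots> = (\<Sum>k\<in>{-int N..int N}. integral {-L..L} (\<lambda>x. complex_of_real (h0 x) * exp (\<i> * complex_of_real ((- (\<xi> - real_of_int k)) * x))))"
        unfolding FI_def L_def by simp
      also have "\<dots> = integral {-L..L} (\<lambda>x. \<Sum>k\<in>{-int N..int N}. complex_of_real (h0 x) * exp (\<i> * complex_of_real ((- (\<xi> - real_of_int k)) * x)))"
        by (rule Henstock_Kurzweil_Integration.integral_sum[symmetric])
           (auto intro!: integrable_continuous_interval continuous_intros ch0)
      also have "\<dots> = integral {-L..L} F"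
      proof (rule integral_cong)
        fix x
        have "(\<Sum>k\<in>{-int N..int N}. complex_of_real (h0 x) * exp (\<i> * complex_of_real ((- (\<xi> - real_of_int k)) * x)))
            = (\<Sum>k\<in>{-int N..int N}. complex_of_real (h0 x) * e (-\<xi>) x * exp (\<i> * complex_of_real (real_of_int k * x)))"
        proof (rule sum.cong[OF refl])
          fix k
          have "e (-\<xi>) x * exp (\<i> * complex_of_real (real_of_int k * x)) = exp (\<i> * complex_of_real ((- (\<xi> - real_of_int k)) * x))"
            unfolding e_def eprod by (rule arg_cong[where f="\<lambda>t. exp (\<i> * complex_of_real t)"]) (simp add: algebra_simps)
          then show "complex_of_real (h0 x) * exp (\<i> * complex_of_real ((- (\<xi> - real_of_int k)) * x)) =
                complex_of_real (h0 x) * e (-\<xi>) x * exp (\<i> * complex_of_real (real_of_int k * x))"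
            by (simp add: mult.assoc)
        qed
        also have "\<dots> = F x" unfolding F_def DN_def sum_distrib_left by simp
        finally show "(\<Sum>k\<in>{-int N..int N}. complex_of_real (h0 x) * exp (\<i> * complex_of_real ((- (\<xi> - real_of_int k)) * x))) = F x" .
      qed
      finally show ?thesis .
    qed
    have s2: "integral {-L..L} F = integral {-L..-pi} F + integral {-pi..pi} F + integral {pi..L} F"
    proof -
      have "integral {-L..-pi} F + integral {-pi..L} F = integral {-L..L} F"
        by (rule Henstock_Kurzweil_Integration.integral_combine) (use L pi_gt3 in \<open>auto intro: iF\<close>)
      moreover have "integral {-pi..pi} F + integral {pi..L} F = integral {-pi..L} F"
        by (rule Henstock_Kurzweil_Integration.integral_combine) (use L pi_gt3 in \<open>auto intro: iF\<close>)
      ultimately show ?thesis by (metis add.assoc)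
    qed
    have s3: "integral {-pi..pi} F = 2 * complex_of_real pi + (I1 (real N + 1) - I1 (- real N))"
    proof -
      have "integral {-pi..pi} F = integral {-pi..pi} (\<lambda>x. DN N x + ((complex_of_real 1 * U (complex_of_real x)) * e (real N + 1) x
                 - (complex_of_real 1 * U (complex_of_real x)) * e (- real N) x))"
      proof (rule integral_cong)
        fix x assume x: "x \<in> {-pi..pi}"
        have h1: "h0 x = 1" using x one by auto
        have "U (complex_of_real x) * (e (real N + 1) x - e (- real N) x) = U (complex_of_real x) * (DN N x * (exp (\<i> * complex_of_real x) - 1))"
          using DN_mult[of N x] unfolding e_def by simp
        also have "\<dots> = DN N x * (U (complex_of_real x) * (exp (\<i> * complex_of_real x) - 1))" by (simp only: mult.left_commute)
        also have "\<dots> = DN N x * (e (-\<xi>) x - 1)" by (simp only: u_eq[OF x])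
        finally show "F x = DN N x + ((complex_of_real 1 * U (complex_of_real x)) * e (real N + 1) x
                 - (complex_of_real 1 * U (complex_of_real x)) * e (- real N) x)"
          unfolding F_def h1 by (simp add: algebra_simps)
      qed
      also have "\<dots> = integral {-pi..pi} (DN N) + (I1 (real N + 1) - I1 (- real N))"
        unfolding I1_def
        by (subst integral_add, (intro integrable_continuous_interval continuous_intros cDN cU ce)+,
            subst integral_diff, (intro integrable_continuous_interval continuous_intros cDN cU ce)+, rule refl)
      finally show ?thesis by (simp add: DN_integral)
    qed
    have side: "integral {a..b} F = integral {a..b} (\<lambda>x. (complex_of_real (h0 x) * V (complex_of_real x)) * e (real N + 1) x)
        - integral {a..b} (\<lambda>x. (complex_of_real (h0 x) * V (complex_of_real x)) * e (- real N) x)"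
      if ab: "\<And>x. x \<in> {a..b} \<Longrightarrow> complex_of_real x \<in> W2" and cV: "continuous_on {a..b} (\<lambda>x. V (complex_of_real x))" for a b
    proof -
      have "integral {a..b} F = integral {a..b} (\<lambda>x. (complex_of_real (h0 x) * V (complex_of_real x)) * e (real N + 1) x
          - (complex_of_real (h0 x) * V (complex_of_real x)) * e (- real N) x)"
      proof (rule integral_cong)
        fix x assume x: "x \<in> {a..b}"
        have ne: "exp (\<i> * complex_of_real x) - 1 \<noteq> 0" using ab[OF x] by (simp add: W2_def)
        have eq1: "e (real N + 1) x - e (- real N) x = DN N x * (exp (\<i> * complex_of_real x) - 1)"
          using DN_mult[of N x] unfolding e_def by simp
        have eq2: "V (complex_of_real x) * (exp (\<i> * complex_of_real x) - 1) = e (-\<xi>) x"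
          using ne unfolding V_def e_def by (simp add: mult.assoc)
        have "(complex_of_real (h0 x) * V (complex_of_real x)) * e (real N + 1) x
          - (complex_of_real (h0 x) * V (complex_of_real x)) * e (- real N) x
          = (complex_of_real (h0 x) * V (complex_of_real x)) * (e (real N + 1) x - e (- real N) x)"
          by (simp only: right_diff_distrib)
        also have "\<dots> = (complex_of_real (h0 x) * V (complex_of_real x)) * (DN N x * (exp (\<i> * complex_of_real x) - 1))"
          by (simp only: eq1)
        also have "\<dots> = complex_of_real (h0 x) * DN N x * (V (complex_of_real x) * (exp (\<i> * complex_of_real x) - 1))"
          by (simp only: mult_ac)
        also have "\<dots> = F x" unfolding eq2 F_def by (simp only: mult_ac)
        finally show "F x = (complex_of_real (h0 x) * V (complex_of_real x)) * e (real N + 1) x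
          - (complex_of_real (h0 x) * V (complex_of_real x)) * e (- real N) x" by simp
      qed
      also have "\<dots> = integral {a..b} (\<lambda>x. (complex_of_real (h0 x) * V (complex_of_real x)) * e (real N + 1) x)
        - integral {a..b} (\<lambda>x. (complex_of_real (h0 x) * V (complex_of_real x)) * e (- real N) x)"
        by (rule integral_diff) (intro integrable_continuous_interval continuous_intros ch0 cV ce)+
      finally show ?thesis .
    qed
    have s4: "integral {pi..L} F = IR (real N + 1) - IR (- real N)"
      unfolding IR_def by (rule side[OF inW2R cVR])
    have s5: "integral {-L..-pi} F = IL (real N + 1) - IL (- real N)"
      unfolding IL_def by (rule side[OF inW2L cVL])
    show ?thesis unfolding s1 s2 s3 s4 s5 by (simp add: algebra_simps)
  qed
  have "(\<lambda>N. 2 * complex_of_real pi + (I1 (real N + 1) - I1 (- real N))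
      + (IR (real N + 1) - IR (- real N)) + (IL (real N + 1) - IL (- real N))) \<longlonglongrightarrow> 2 * complex_of_real pi + (0 - 0) + (0 - 0) + (0 - 0)"
    by (intro tendsto_intros t1 tR tL)
  then have "(\<lambda>N. (2 * complex_of_real pi * T N) / (2 * complex_of_real pi)) \<longlonglongrightarrow> (2 * complex_of_real pi) / (2 * complex_of_real pi)"
    unfolding key by (intro tendsto_intros) auto
  then have "T \<longlonglongrightarrow> 1" by simp
  moreover have "T \<longlonglongrightarrow> infsum (\<lambda>k::int. fourier h0 (\<xi> - real_of_int k)) UNIV"
    unfolding T_def by (rule sym_partial_sums[OF H_summable])
  ultimately show ?thesis using LIMSEQ_unique by metis
qed

end


lemma powr_mvt:
  fixes a b c p :: real
  assumes p: "p > 0" and c: "0 < c" "c \<le> a" "c \<le> b"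
  shows "\<bar>a powr (-p) - b powr (-p)\<bar> \<le> p * c powr (-p-1) * \<bar>a - b\<bar>"
proof -
  have main: "\<bar>y powr (-p) - x powr (-p)\<bar> \<le> p * c powr (-p-1) * \<bar>y - x\<bar>" if xy: "c \<le> x" "x < y" for x y
  proof -
    have "\<And>t. x \<le> t \<Longrightarrow> t \<le> y \<Longrightarrow> ((\<lambda>t. t powr (-p)) has_real_derivative (-p) * t powr (-p - 1)) (at t)"
      using c xy by (intro has_real_derivative_powr) auto
    from MVT2[OF \<open>x < y\<close> this] obtain z where z: "x < z" "z < y"
      and eq: "y powr (-p) - x powr (-p) = (y - x) * ((-p) * z powr (-p - 1))" by blast
    have "z powr (-p-1) \<le> c powr (-p-1)"
      by (rule powr_mono2') (use p c xy z in auto)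
    then have "\<bar>(y - x) * ((-p) * z powr (-p - 1))\<bar> \<le> (y - x) * (p * c powr (-p-1))"
      using xy p by (simp add: abs_mult mult_left_mono)
    then show ?thesis unfolding eq using xy by (simp add: algebra_simps)
  qed
  show ?thesis
  proof (cases a b rule: linorder_cases)
    case less then show ?thesis using main[of a b] c by (simp add: abs_minus_commute)
  next
    case equal then show ?thesis by simp
  next
    case greater then show ?thesis using main[of b a] c by simp
  qed
qed

lemma dcoef_delta: "dcoef p dp dm k = delta_sym p dp dm (real_of_int k)"
  unfolding dcoef_def delta_sym_def by simp

lemma delta_bound:
  assumes "p > 0" "1 \<le> \<bar>t\<bar> \<or> t = 0"
  shows "\<bar>delta_sym p dp dm t\<bar> \<le> max \<bar>dp\<bar> \<bar>dm\<bar>"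
proof -
  have pw: "\<bar>t\<bar> powr (-p) \<le> 1" if "1 \<le> \<bar>t\<bar>"
    using that assms(1) by (simp add: powr_le_one_le ge_one_powr_ge_zero powr_minus_divide)
  show ?thesis
  proof (cases "t = 0")
    case True then show ?thesis by (simp add: delta_sym_def)
  next
    case False
    then have t1: "1 \<le> \<bar>t\<bar>" using assms(2) by auto
    have "\<bar>dp * t powr (-p)\<bar> \<le> \<bar>dp\<bar>" if "t > 0"
      using pw[OF t1] that by (simp add: abs_mult mult_left_le)
    moreover have "\<bar>dm * \<bar>t\<bar> powr (-p)\<bar> \<le> \<bar>dm\<bar>"
      using pw[OF t1] by (simp add: abs_mult mult_left_le)
    ultimately show ?thesis unfolding delta_sym_def by auto
  qed
qed

lemma delta_lip:
  assumes p: "p > 0" and xi: "2 \<le> \<bar>\<xi>\<bar>" and kx: "\<bar>k - \<xi>\<bar> \<le> \<bar>\<xi>\<bar> / 2"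
  shows "\<bar>delta_sym p dp dm k - delta_sym p dp dm \<xi>\<bar> \<le> max \<bar>dp\<bar> \<bar>dm\<bar> * (p * (\<bar>\<xi>\<bar>/2) powr (-p-1)) * \<bar>k - \<xi>\<bar>"
proof (cases "\<xi> > 0")
  case True
  have ax: "\<bar>\<xi>\<bar> = \<xi>" using True by simp
  have k: "k \<ge> \<xi>/2" "\<xi>/2 > 0" using kx True abs_ge_minus_self[of "k - \<xi>"] unfolding ax by linarith+
  have "\<bar>delta_sym p dp dm k - delta_sym p dp dm \<xi>\<bar> = \<bar>dp\<bar> * \<bar>k powr (-p) - \<xi> powr (-p)\<bar>"
    unfolding delta_sym_def using k True by (simp add: abs_mult[symmetric] algebra_simps)
  also have "\<dots> \<le> \<bar>dp\<bar> * (p * (\<xi>/2) powr (-p-1) * \<bar>k - \<xi>\<bar>)"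
    by (intro mult_left_mono powr_mvt) (use p k True in auto)
  also have "\<dots> \<le> max \<bar>dp\<bar> \<bar>dm\<bar> * (p * (\<bar>\<xi>\<bar>/2) powr (-p-1)) * \<bar>k - \<xi>\<bar>"
    using True p by (simp add: mult.assoc mult_right_mono)
  finally show ?thesis .
next
  case False
  then have xn: "\<xi> < 0" using xi by auto
  have ax: "\<bar>\<xi>\<bar> = -\<xi>" using xn by simp
  have k: "k \<le> \<xi>/2" "\<xi>/2 < 0" using kx xn abs_ge_self[of "k - \<xi>"] unfolding ax by linarith+
  have "\<bar>delta_sym p dp dm k - delta_sym p dp dm \<xi>\<bar> = \<bar>dm\<bar> * \<bar>\<bar>k\<bar> powr (-p) - \<bar>\<xi>\<bar> powr (-p)\<bar>"
    unfolding delta_sym_def using k xn by (simp add: abs_mult[symmetric] algebra_simps)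
  also have "\<dots> \<le> \<bar>dm\<bar> * (p * (\<bar>\<xi>\<bar>/2) powr (-p-1) * \<bar>\<bar>k\<bar> - \<bar>\<xi>\<bar>\<bar>)"
    by (intro mult_left_mono powr_mvt) (use p k xn in auto)
  also have "\<bar>\<bar>k\<bar> - \<bar>\<xi>\<bar>\<bar> = \<bar>k - \<xi>\<bar>" using k xn by auto
  also have "\<bar>dm\<bar> * (p * (\<bar>\<xi>\<bar>/2) powr (-p-1) * \<bar>k - \<xi>\<bar>) \<le> max \<bar>dp\<bar> \<bar>dm\<bar> * (p * (\<bar>\<xi>\<bar>/2) powr (-p-1)) * \<bar>k - \<xi>\<bar>"
    using p by (simp add: mult.assoc mult_right_mono)
  finally show ?thesis .
qed



lemma G1:
  fixes a :: real assumes a: "0 \<le> a" and m: "3 \<le> m"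
  shows "a / (1 + a)^m \<le> 1 / (1 + a)^2"
proof -
  have pos: "0 < (1 + a)^2" "0 < (1 + a)^m" using a by simp_all
  have eq: "(1 + a)^m = (1 + a)^(m-2) * (1 + a)^2"
  proof -
    have "m = (m - 2) + 2" using m by simp
    then show ?thesis by (metis power_add)
  qed
  have "(1 + a)^1 \<le> (1 + a)^(m-2)" by (rule power_increasing) (use m a in auto)
  then have "a \<le> (1 + a)^(m-2)" by simp
  then have "a * (1 + a)^2 \<le> (1 + a)^(m-2) * (1 + a)^2" by (rule mult_right_mono) simp
  then have le: "a * (1 + a)^2 \<le> (1 + a)^m" unfolding eq .
  have "a * (1 + a)^2 / ((1 + a)^m * (1 + a)^2) \<le> (1 + a)^m / ((1 + a)^m * (1 + a)^2)"
    by (rule divide_right_mono[OF le]) (use pos in simp)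
  moreover have "a * (1 + a)^2 / ((1 + a)^m * (1 + a)^2) = a / (1 + a)^m"
    using pos by simp
  moreover have "(1 + a)^m / ((1 + a)^m * (1 + a)^2) = 1 / (1 + a)^2"
    using pos by simp
  ultimately show ?thesis by simp
qed

lemma G3:
  fixes X p :: real assumes "0 < X"
  shows "(X/2) powr (-p-1) = 2 powr (p+1) * X powr (-p-1)"
proof -
  have o: "2 powr (p+1) * 2 powr (-p-1) = (1::real)" by (simp flip: powr_add)
  have "(X/2) powr (-p-1) = X powr (-p-1) / 2 powr (-p-1)" using assms by (simp add: powr_divide)
  also have "\<dots> = 2 powr (p+1) * X powr (-p-1)"
    using o by (simp add: divide_simps)
  finally show ?thesis .
qed

lemma G2:
  fixes a X p :: real
  assumes a: "0 \<le> a" and X: "2 \<le> X" and aX: "X/2 < a" and mp: "p + 1 \<le> real (m - 2)" and m: "2 \<le> m"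
  shows "1 / (1 + a)^m \<le> 2^(m-2) * X powr (-p-1) / (1 + a)^2"
proof -
  define n where "n = m - 2"
  have eq: "(1 + a)^m = (1 + a)^2 * (1 + a)^n"
  proof -
    have "m = 2 + n" using m unfolding n_def by simp
    then show ?thesis by (metis power_add)
  qed
  have "X powr (p + 1) \<le> X powr real n" by (rule powr_mono) (use mp X in \<open>auto simp: n_def\<close>)
  also have "\<dots> = X^n" using X by (simp add: powr_realpow)
  finally have x1: "X powr (p+1) \<le> X^n" .
  have "(X/2)^n \<le> (1 + a)^n" by (rule power_mono) (use aX X in auto)
  then have "X^n / 2^n \<le> (1 + a)^n" by (simp add: power_divide)
  then have "X^n \<le> 2^n * (1 + a)^n" by (simp add: pos_divide_le_eq mult.commute)
  with x1 have x2: "X powr (p+1) \<le> 2^n * (1 + a)^n" by linarith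
  have Xp: "0 < X powr (p+1)" using X by simp
  have Yp: "0 < (1 + a)^n" using a by simp
  have "2^n / (2^n * (1 + a)^n) \<le> 2^n / X powr (p+1)"
    by (rule divide_left_mono[OF x2]) (use Xp Yp in auto)
  moreover have "2^n / (2^n * (1 + a)^n) = 1 / (1 + a)^n" by simp
  moreover have "2^n / X powr (p+1) = 2^n * X powr (-p-1)"
  proof -
    have "X powr (-p-1) = inverse (X powr (p+1))" using powr_minus[of X "p+1"] by simp
    then show ?thesis by (simp add: divide_inverse)
  qed
  ultimately have "1 / (1 + a)^n \<le> 2^n * X powr (-p-1)" by simp
  then have "1 / (1 + a)^n / (1 + a)^2 \<le> 2^n * X powr (-p-1) / (1 + a)^2"
    by (rule divide_right_mono) (use a in simp)
  moreover have "1 / (1 + a)^n / (1 + a)^2 = 1 / (1 + a)^m" unfolding eq by (simp add: mult.commute)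
  ultimately show ?thesis unfolding n_def by simp
qed



lemma termb:
  fixes p dp dm C \<xi> :: real and k :: int and H :: "real \<Rightarrow> complex" and m :: nat
  assumes p: "p > 0" and m: "3 \<le> m" and mp: "p + 1 \<le> real (m - 2)"
    and C: "\<And>\<eta>. norm (H \<eta>) \<le> C / (1 + \<bar>\<eta>\<bar>)^m" and C0: "0 \<le> C"
    and xi: "2 \<le> \<bar>\<xi>\<bar>"
  shows "norm (complex_of_real (dcoef p dp dm k - delta_sym p dp dm \<xi>) * H (\<xi> - real_of_int k))
     \<le> (C * max \<bar>dp\<bar> \<bar>dm\<bar> * p * 2 powr (p+1) + 2 * max \<bar>dp\<bar> \<bar>dm\<bar> * C * 2^(m-2)) * \<bar>\<xi>\<bar> powr (-p-1)
        * (1 / (1 + \<bar>\<xi> - real_of_int k\<bar>)^2)"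
proof -
  define Dm where "Dm = max \<bar>dp\<bar> \<bar>dm\<bar>"
  define a where "a = \<bar>\<xi> - real_of_int k\<bar>"
  define X where "X = \<bar>\<xi>\<bar>"
  define d where "d = dcoef p dp dm k - delta_sym p dp dm \<xi>"
  have Dm0: "0 \<le> Dm" unfolding Dm_def by simp
  have a0: "0 \<le> a" unfolding a_def by simp
  have X2: "2 \<le> X" using xi unfolding X_def .
  have Xq: "0 \<le> X powr (-p-1)" by simp
  have nH: "norm (H (\<xi> - real_of_int k)) \<le> C / (1 + a)^m" using C unfolding a_def .
  have nHp: "0 \<le> norm (H (\<xi> - real_of_int k))" by simp
  have lhs: "norm (complex_of_real d * H (\<xi> - real_of_int k)) = \<bar>d\<bar> * norm (H (\<xi> - real_of_int k))"
    by (simp add: norm_mult)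
  define A1 where "A1 = C * Dm * p * 2 powr (p+1)"
  define A2 where "A2 = 2 * Dm * C * 2^(m-2)"
  have A10: "0 \<le> A1" unfolding A1_def using C0 Dm0 p by simp
  have A20: "0 \<le> A2" unfolding A2_def using C0 Dm0 by simp
  have w0: "0 \<le> 1 / (1 + a)^2" using a0 by simp
  have "\<bar>d\<bar> * norm (H (\<xi> - real_of_int k)) \<le> (A1 + A2) * X powr (-p-1) * (1 / (1 + a)^2)"
  proof (cases "a \<le> X / 2")
    case True
    have "\<bar>d\<bar> \<le> Dm * (p * (X/2) powr (-p-1)) * a"
      unfolding d_def dcoef_delta Dm_def X_def a_def
      using delta_lip[OF p xi, of "real_of_int k" dp dm] True unfolding X_def a_def
      by (simp add: abs_minus_commute)
    also have "\<dots> = (Dm * p * 2 powr (p+1) * X powr (-p-1)) * a"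
      using G3[of X p] X2 by simp
    finally have dl: "\<bar>d\<bar> \<le> (Dm * p * 2 powr (p+1) * X powr (-p-1)) * a" .
    have K0: "0 \<le> Dm * p * 2 powr (p+1) * X powr (-p-1)" using Dm0 p by simp
    have "\<bar>d\<bar> * norm (H (\<xi> - real_of_int k)) \<le> ((Dm * p * 2 powr (p+1) * X powr (-p-1)) * a) * (C / (1 + a)^m)"
      by (rule mult_mono[OF dl nH]) (use K0 a0 in simp_all)
    also have "\<dots> = (Dm * p * 2 powr (p+1) * X powr (-p-1)) * C * (a / (1 + a)^m)" by simp
    also have "\<dots> \<le> (Dm * p * 2 powr (p+1) * X powr (-p-1)) * C * (1 / (1 + a)^2)"
      by (rule mult_left_mono[OF G1[OF a0 m]]) (use K0 C0 in simp)
    also have "\<dots> = A1 * X powr (-p-1) * (1 / (1 + a)^2)" unfolding A1_def by simp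
    also have "\<dots> \<le> (A1 + A2) * X powr (-p-1) * (1 / (1 + a)^2)"
      by (intro mult_right_mono) (use A20 Xq w0 in simp_all)
    finally show ?thesis .
  next
    case False
    have "k = 0 \<or> 1 \<le> \<bar>k\<bar>" by auto
    then have k1: "1 \<le> \<bar>real_of_int k\<bar> \<or> real_of_int k = 0"
      by (metis of_int_0 of_int_abs of_int_le_iff of_int_1)
    have "\<bar>d\<bar> \<le> \<bar>delta_sym p dp dm (real_of_int k)\<bar> + \<bar>delta_sym p dp dm \<xi>\<bar>"
      unfolding d_def dcoef_delta by linarith
    also have "\<dots> \<le> Dm + Dm" unfolding Dm_def
      by (intro add_mono delta_bound p k1) (use xi in auto)
    finally have dl: "\<bar>d\<bar> \<le> 2 * Dm" by simp
    have g2: "1 / (1 + a)^m \<le> 2^(m-2) * X powr (-p-1) / (1 + a)^2"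
      by (rule G2[OF a0 X2 _ mp]) (use False m in auto)
    have "C / (1 + a)^m = C * (1 / (1 + a)^m)" by simp
    also have "\<dots> \<le> C * (2^(m-2) * X powr (-p-1) / (1 + a)^2)" by (rule mult_left_mono[OF g2 C0])
    finally have nH2: "norm (H (\<xi> - real_of_int k)) \<le> C * (2^(m-2) * X powr (-p-1) / (1 + a)^2)"
      using nH by linarith
    have "\<bar>d\<bar> * norm (H (\<xi> - real_of_int k)) \<le> (2 * Dm) * (C * (2^(m-2) * X powr (-p-1) / (1 + a)^2))"
      by (rule mult_mono[OF dl nH2]) (use Dm0 in simp_all)
    also have "\<dots> = A2 * X powr (-p-1) * (1 / (1 + a)^2)" unfolding A2_def by simp
    also have "\<dots> \<le> (A1 + A2) * X powr (-p-1) * (1 / (1 + a)^2)"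
      by (intro mult_right_mono) (use A10 Xq w0 in simp_all)
    finally show ?thesis .
  qed
  then show ?thesis unfolding lhs[unfolded d_def] A1_def A2_def Dm_def X_def a_def d_def .
qed

theorem mainTheorem3:
  fixes p dp dm :: real and h0 \<zeta> :: "real \<Rightarrow> real"
  assumes "p > 1/2"
    and "smooth h0"
    and "\<forall>x. -pi \<le> x \<and> x \<le> pi \<longrightarrow> h0 x = 1"
    and "\<forall>x. \<bar>x\<bar> > 3 * pi / 2 \<longrightarrow> h0 x = 0"
    and "smooth \<zeta>"
    and "\<exists>\<epsilon>>0. \<forall>x. \<bar>x\<bar> < \<epsilon> \<longrightarrow> \<zeta> x = 0"
    and "\<exists>R. \<forall>x. \<bar>x\<bar> > R \<longrightarrow> \<zeta> x = 1"
  shows "(\<lambda>\<xi>. norm (D1_hat p dp dm h0 \<zeta> \<xi>)) \<in> o[at_infinity](\<lambda>\<xi>. \<bar>\<xi>\<bar> powr (- p))"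
proof -
  interpret bump2 h0
    by unfold_locales (use assms(2,3,4) in auto)
  have p: "p > 0" using assms(1) by simp
  define Dm where "Dm = max \<bar>dp\<bar> \<bar>dm\<bar>"
  define m where "m = nat \<lceil>p\<rceil> + 3"
  have m3: "3 \<le> m" unfolding m_def by simp
  have mp: "p + 1 \<le> real (m - 2)" unfolding m_def
    using of_nat_ceiling[of p] by simp
  obtain C where C: "\<And>\<eta>. norm (fourier h0 \<eta>) \<le> C / (1 + \<bar>\<eta>\<bar>)^m"
    using fourier_decay[of m] by blast
  have C0: "0 \<le> C" using C[of 0] norm_ge_zero[of "fourier h0 0"] by (simp del: norm_ge_zero)
  obtain R where R: "\<And>x. \<bar>x\<bar> > R \<Longrightarrow> \<zeta> x = 1" using assms(7) by blast
  define A where "A = C * Dm * p * 2 powr (p+1) + 2 * Dm * C * 2^(m-2)"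
  have A0: "0 \<le> A" unfolding A_def Dm_def using C0 p by simp
  have S00: "0 \<le> S0" unfolding S0_def by (rule infsum_nonneg) (simp add: w_nonneg)
  have bound: "norm (D1_hat p dp dm h0 \<zeta> \<xi>) \<le> 4 * S0 * A * \<bar>\<xi>\<bar> powr (-p-1)"
    if xi: "max 2 (R + 1) \<le> \<bar>\<xi>\<bar>" for \<xi>
  proof -
    have xi2: "2 \<le> \<bar>\<xi>\<bar>" using xi by simp
    have z1: "\<zeta> \<xi> = 1" using R xi by simp
    define f where "f k = complex_of_real (dcoef p dp dm k) * fourier h0 (\<xi> - real_of_int k)" for k
    define g where "g k = complex_of_real (delta_sym p dp dm \<xi>) * fourier h0 (\<xi> - real_of_int k)" for k
    define t where "t k = complex_of_real (dcoef p dp dm k - delta_sym p dp dm \<xi>) * fourier h0 (\<xi> - real_of_int k)" for k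
    have Hs: "(\<lambda>k. fourier h0 (\<xi> - real_of_int k)) summable_on UNIV" by (rule H_summable)
    have Hn: "(\<lambda>k. norm (fourier h0 (\<xi> - real_of_int k))) summable_on UNIV"
      using Hs by (simp add: summable_on_iff_abs_summable_on_complex)
    have fs: "f summable_on UNIV"
    proof -
      have "(\<lambda>k. norm (f k)) summable_on UNIV"
      proof (rule Infinite_Sum.abs_summable_on_comparison_test'[OF summable_on_cmult_right[OF Hn, of Dm]])
        fix k :: int
        have k1: "1 \<le> \<bar>real_of_int k\<bar> \<or> real_of_int k = 0"
        proof -
          have "k = 0 \<or> 1 \<le> \<bar>k\<bar>" by auto
          then show ?thesis by (metis of_int_0 of_int_abs of_int_le_iff of_int_1)
        qed
        have "\<bar>dcoef p dp dm k\<bar> \<le> Dm" unfolding dcoef_delta Dm_def by (rule delta_bound[OF p k1])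
        then show "norm (f k) \<le> Dm * norm (fourier h0 (\<xi> - real_of_int k))"
          unfolding f_def by (simp add: norm_mult mult_right_mono)
      qed
      then show ?thesis by (simp add: summable_on_iff_abs_summable_on_complex)
    qed
    have gs: "g summable_on UNIV" unfolding g_def by (rule summable_on_cmult_right[OF Hs])
    have ig: "infsum g UNIV = complex_of_real (delta_sym p dp dm \<xi>)"
      unfolding g_def by (subst infsum_cmult_right) (use Hs poisson in auto)
    have eqD: "D1_hat p dp dm h0 \<zeta> \<xi> = infsum t UNIV"
    proof -
      have "infsum t UNIV = infsum (\<lambda>k. f k + - g k) UNIV"
        unfolding t_def f_def g_def by (simp add: algebra_simps)
      also have "\<dots> = infsum f UNIV + infsum (\<lambda>k. - g k) UNIV"
        by (rule infsum_add[OF fs]) (use gs in \<open>simp add: summable_on_uminus\<close>)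
      also have "\<dots> = infsum f UNIV - infsum g UNIV" by (simp add: infsum_uminus)
      finally show ?thesis unfolding D1_hat_def ig f_def z1 by simp
    qed
    define W where "W k = 1 / (1 + \<bar>\<xi> - real_of_int k\<bar>)^2" for k
    have Ws: "W summable_on UNIV" unfolding W_def by (rule shifted_summable(1))
    have Wi: "infsum W UNIV \<le> 4 * S0" unfolding W_def by (rule shifted_summable(2))
    have tb: "norm (t k) \<le> A * \<bar>\<xi>\<bar> powr (-p-1) * W k" for k
      unfolding t_def A_def W_def Dm_def by (rule termb[OF p m3 mp C C0 xi2])
    have AWs: "(\<lambda>k. A * \<bar>\<xi>\<bar> powr (-p-1) * W k) summable_on UNIV"
      by (rule summable_on_cmult_right[OF Ws])
    have tn: "(\<lambda>k. norm (t k)) summable_on UNIV"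
      by (rule Infinite_Sum.abs_summable_on_comparison_test'[OF AWs tb])
    have "norm (infsum t UNIV) \<le> infsum (\<lambda>k. norm (t k)) UNIV"
      by (rule norm_infsum_bound) (use tn in simp)
    also have "\<dots> \<le> infsum (\<lambda>k. A * \<bar>\<xi>\<bar> powr (-p-1) * W k) UNIV"
      by (rule infsum_mono[OF tn AWs tb])
    also have "\<dots> = A * \<bar>\<xi>\<bar> powr (-p-1) * infsum W UNIV"
      by (rule infsum_cmult_right) (use Ws in simp)
    also have "\<dots> \<le> A * \<bar>\<xi>\<bar> powr (-p-1) * (4 * S0)"
      by (rule mult_left_mono[OF Wi]) (use A0 in simp)
    finally show ?thesis unfolding eqD by (simp add: algebra_simps)
  qed
  show ?thesis
    unfolding smallo_def
  proof (safe)
    fix c :: real assume c: "0 < c"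
    define B where "B = max (max 2 (R + 1)) (4 * S0 * A / c)"
    show "\<forall>\<^sub>F x in at_infinity. norm (norm (D1_hat p dp dm h0 \<zeta> x)) \<le> c * norm (\<bar>x\<bar> powr - p)"
      unfolding eventually_at_infinity
    proof (intro exI allI impI)
      fix \<xi> :: real assume xB: "B \<le> norm \<xi>"
      then have x1: "max 2 (R + 1) \<le> \<bar>\<xi>\<bar>" and x2: "4 * S0 * A / c \<le> \<bar>\<xi>\<bar>" unfolding B_def by auto
      have xpos: "0 < \<bar>\<xi>\<bar>" using x1 by (simp add: max_def split: if_splits)
      have pw: "\<bar>\<xi>\<bar> powr (-p-1) = \<bar>\<xi>\<bar> powr (-p) / \<bar>\<xi>\<bar>"
        using xpos by (simp add: powr_diff powr_minus divide_inverse)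
      have "norm (D1_hat p dp dm h0 \<zeta> \<xi>) \<le> 4 * S0 * A * \<bar>\<xi>\<bar> powr (-p-1)" by (rule bound[OF x1])
      also have "\<dots> = (4 * S0 * A / \<bar>\<xi>\<bar>) * \<bar>\<xi>\<bar> powr (-p)" unfolding pw by simp
      also have "\<dots> \<le> c * \<bar>\<xi>\<bar> powr (-p)"
      proof (rule mult_right_mono)
        show "4 * S0 * A / \<bar>\<xi>\<bar> \<le> c" using x2 xpos c by (simp add: divide_simps mult.commute)
      qed simp
      finally show "norm (norm (D1_hat p dp dm h0 \<zeta> \<xi>)) \<le> c * norm (\<bar>\<xi>\<bar> powr - p)" by simp
    qed
  qed
qed

end
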